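(* Fix $N\ge 1$, positive real weights $\omega_1,\dots,\omega_N$, a complex vector $\bm{\alpha}=(\alpha_1,\dots,\alpha_N)\in\mathbb{C}^N$, and an integer $n\ge 1$. Let $\rho_{\bm a}$ be a state (density operator) on the signal modes $\bm a$ such that the expectations $\operatorname{tr}(\rho_{\bm a}\,M)$ are well-defined and finite for every polynomial $M$ of degree at most $n$ in the operators $\hat a_k,\hat a_k^\dagger$ ($k=1,\dots,N$). Let the joint state of signal and LO modes be $\rho=\rho_{\bm a}\otimes \bm 0_{\bm b}$. Then, as $\delta\to 0^+$, $$\langle \hat q_\delta^{\,n}\rangle_\rho=\langle \hat q^{\,n}\rangle_\rho+O(\delta^2),$$ where the constant implicit in $O(\delta^2)$ depends on $\rho_{\bm a}$ (and on $n$, $\bm\alpha$, $\bm\omega$) but not on $\delta$.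
   Context: Modes: $\hat a_1,\dots,\hat a_N$ (signal modes $\bm a$) and $\hat b_1,\dots,\hat b_N$ (local-oscillator modes $\bm b$, taken before the LO displacement) are $2N$ mutually orthogonal bosonic modes: $[\hat a_k,\hat a_l^\dagger]=[\hat b_k,\hat b_l^\dagger]=\delta_{kl}$, all other commutators between annihilation/creation operators vanish. The joint Hilbert space is the tensor product of the Fock spaces of the signal modes and LO modes; $\bm 0_{\bm b}$ denotes the vacuum state (density operator) of all LO modes. The target quadrature is $\hat q=\hat q_{\bm a,\bm\alpha}=\sum_{k=1}^N -i(\alpha_k\hat a_k^\dagger-\alpha_k^*\hat a_k)$ (acting on the signal modes). For $\delta>0$, set $\beta_k=-i\alpha_k/\omega_k$ and define the outgoing modes $\hat c_k=\frac1{\sqrt2}(\hat a_k+\hat b_k+\beta_k/\delta)$, $\hat d_k=\frac1{\sqrt2}(\hat a_k-\hat b_k-\beta_k/\delta)$. The broadband pulsed (BBP) homodyne measurement operator is the self-adjoint operator $\hat q_\delta=\delta\sum_{k=1}^N\omega_k(\hat c_k^\dagger\hat c_k-\hat d_k^\dagger\hat d_k)$ (a scaled difference of two commuting weighted total-photon-number/energy operators), which equals $\hat q+\delta\sum_{k=1}^N\omega_k(\hat a_k^\dagger\hat b_k+\hat b_k^\dagger\hat a_k)$. Also $\hat q_0:=\hat q$. $\langle X\rangle_\rho=\operatorname{tr}(\rho X)$. *)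

theory Defs
  imports "HOL-Analysis.Analysis" "HOL-Library.Landau_Symbols"
begin

text \<open>Concrete Fock-space model in the number (occupation) basis.
  Mode labels have type 'i; an occupation-number configuration is a function
  'i \<Rightarrow> nat; a vector (possibly non-normalizable, coordinates in the number
  basis) is a function (('i \<Rightarrow> nat) \<Rightarrow> complex).\<close>

type_synonym 'i vec = "('i \<Rightarrow> nat) \<Rightarrow> complex"
type_synonym 'i op = "'i vec \<Rightarrow> 'i vec"

definition lower :: "'i \<Rightarrow> 'i op" where
  "lower k \<psi> = (\<lambda>m. complex_of_real (sqrt (real (m k + 1))) * \<psi> (m(k := m k + 1)))"

definition raise :: "'i \<Rightarrow> 'i op" where
  "raise k \<psi> = (\<lambda>m. if m k = 0 then 0
                     else complex_of_real (sqrt (real (m k))) * \<psi> (m(k := m k - 1)))"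

definition basis :: "('i \<Rightarrow> nat) \<Rightarrow> 'i vec" where
  "basis m = (\<lambda>m'. if m' = m then 1 else 0)"

definition occ_sig :: "nat \<Rightarrow> (nat \<Rightarrow> nat) set" where
  "occ_sig N = {m. \<forall>k. k \<notin> {1..N} \<longrightarrow> m k = 0}"

text \<open>Joint modes: Inl k = signal mode a_k, Inr k = local-oscillator mode b_k.\<close>
definition occ_joint :: "nat \<Rightarrow> (nat + nat \<Rightarrow> nat) set" where
  "occ_joint N = {m. \<forall>k. k \<notin> {1..N} \<longrightarrow> m (Inl k) = 0 \<and> m (Inr k) = 0}"

text \<open>A density matrix (rho m m' = <m|rho|m'>) on the span of the basis B:
  hermitian, positive semidefinite, trace one.\<close>
definition density_matrix :: "('i \<Rightarrow> nat) set \<Rightarrow> (('i \<Rightarrow> nat) \<Rightarrow> ('i \<Rightarrow> nat) \<Rightarrow> complex) \<Rightarrow> bool" where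
  "density_matrix B \<rho> \<longleftrightarrow>
     (\<forall>m\<in>B. \<forall>m'\<in>B. \<rho> m m' = cnj (\<rho> m' m)) \<and>
     (\<forall>F x. finite F \<longrightarrow> F \<subseteq> B \<longrightarrow>
        0 \<le> Re (\<Sum>m\<in>F. \<Sum>m'\<in>F. cnj (x m) * \<rho> m m' * x m')) \<and>
     ((\<lambda>m. \<rho> m m) has_sum 1) B"

text \<open>Summand of tr(rho X) = sum_{m,m'} <m|rho|m'> <m'|X|m>.\<close>
definition tr_summand :: "(('i \<Rightarrow> nat) \<Rightarrow> ('i \<Rightarrow> nat) \<Rightarrow> complex) \<Rightarrow> 'i op \<Rightarrow> ('i \<Rightarrow> nat) \<times> ('i \<Rightarrow> nat) \<Rightarrow> complex" where
  "tr_summand \<rho> X = (\<lambda>(m, m'). \<rho> m m' * X (basis m) m')"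

definition expect :: "('i \<Rightarrow> nat) set \<Rightarrow> (('i \<Rightarrow> nat) \<Rightarrow> ('i \<Rightarrow> nat) \<Rightarrow> complex) \<Rightarrow> 'i op \<Rightarrow> complex" where
  "expect B \<rho> X = (\<Sum>\<^sub>\<infinity>p\<in>B \<times> B. tr_summand \<rho> X p)"

text \<open>Monomial (word) in the signal operators: (True,k) = a_k^dagger, (False,k) = a_k.\<close>
definition word_op :: "(bool \<times> 'i) list \<Rightarrow> 'i op" where
  "word_op w = foldr (\<lambda>(d, k) acc. (if d then raise k else lower k) \<circ> acc) w id"

text \<open>Joint state rho_a \<otimes> vacuum on the LO modes.\<close>
definition joint_state :: "((nat \<Rightarrow> nat) \<Rightarrow> (nat \<Rightarrow> nat) \<Rightarrow> complex) \<Rightarrow> (nat + nat \<Rightarrow> nat) \<Rightarrow> (nat + nat \<Rightarrow> nat) \<Rightarrow> complex" where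
  "joint_state \<rho>a m m' =
     (if (\<forall>k. m (Inr k) = 0 \<and> m' (Inr k) = 0) then \<rho>a (m \<circ> Inl) (m' \<circ> Inl) else 0)"

definition quad :: "nat \<Rightarrow> (nat \<Rightarrow> complex) \<Rightarrow> (nat + nat) op" where
  "quad N \<alpha> \<psi> = (\<lambda>m. \<Sum>k\<in>{1..N}.
      - \<i> * (\<alpha> k * raise (Inl k) \<psi> m - cnj (\<alpha> k) * lower (Inl k) \<psi> m))"

definition beta :: "(nat \<Rightarrow> complex) \<Rightarrow> (nat \<Rightarrow> real) \<Rightarrow> nat \<Rightarrow> complex" where
  "beta \<alpha> \<omega> k = - \<i> * \<alpha> k / complex_of_real (\<omega> k)"

text \<open>Outgoing modes c_k, d_k and their adjoints (sign s = 1 for c, -1 for d).\<close>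
definition out_lower :: "real \<Rightarrow> (nat \<Rightarrow> complex) \<Rightarrow> (nat \<Rightarrow> real) \<Rightarrow> real \<Rightarrow> nat \<Rightarrow> (nat + nat) op" where
  "out_lower s \<alpha> \<omega> \<delta> k \<psi> = (\<lambda>m. (lower (Inl k) \<psi> m
      + complex_of_real s * (lower (Inr k) \<psi> m + beta \<alpha> \<omega> k / complex_of_real \<delta> * \<psi> m))
      / complex_of_real (sqrt 2))"

definition out_raise :: "real \<Rightarrow> (nat \<Rightarrow> complex) \<Rightarrow> (nat \<Rightarrow> real) \<Rightarrow> real \<Rightarrow> nat \<Rightarrow> (nat + nat) op" where
  "out_raise s \<alpha> \<omega> \<delta> k \<psi> = (\<lambda>m. (raise (Inl k) \<psi> m
      + complex_of_real s * (raise (Inr k) \<psi> m + cnj (beta \<alpha> \<omega> k) / complex_of_real \<delta> * \<psi> m))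
      / complex_of_real (sqrt 2))"

definition quad_bbp :: "nat \<Rightarrow> (nat \<Rightarrow> complex) \<Rightarrow> (nat \<Rightarrow> real) \<Rightarrow> real \<Rightarrow> (nat + nat) op" where
  "quad_bbp N \<alpha> \<omega> \<delta> \<psi> = (\<lambda>m. complex_of_real \<delta> * (\<Sum>k\<in>{1..N}. complex_of_real (\<omega> k) *
      (out_raise 1 \<alpha> \<omega> \<delta> k (out_lower 1 \<alpha> \<omega> \<delta> k \<psi>) m
       - out_raise (-1) \<alpha> \<omega> \<delta> k (out_lower (-1) \<alpha> \<omega> \<delta> k \<psi>) m)))"

end

theory Submission imports Defs "HOL-Library.Landau_Symbols" begin

definition opx :: "bool \<times> 'i \<Rightarrow> 'i op" where
  "opx x = (case x of (d, k) \<Rightarrow> if d then raise k else lower k)"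

lemma word_op_Nil[simp]: "word_op [] = id" by (simp add: word_op_def)
lemma word_op_Cons[simp]: "word_op (x # w) = opx x \<circ> word_op w"
  by (simp add: word_op_def opx_def split: prod.splits)
lemma word_op_append: "word_op (xs @ ys) = word_op xs \<circ> word_op ys"
  by (induction xs) auto

lemma lower_lin: "lower k (\<lambda>m. \<Sum>i\<in>I. c i * f i m) = (\<lambda>m. \<Sum>i\<in>I. c i * lower k (f i) m)"
  by (simp add: lower_def sum_distrib_left mult.left_commute)
lemma raise_lin: "raise k (\<lambda>m. \<Sum>i\<in>I. c i * f i m) = (\<lambda>m. \<Sum>i\<in>I. c i * raise k (f i) m)"
  by (auto simp add: raise_def sum_distrib_left mult.left_commute fun_eq_iff)
lemma opx_lin: "opx x (\<lambda>m. \<Sum>i\<in>I. c i * f i m) = (\<lambda>m. \<Sum>i\<in>I. c i * opx x (f i) m)"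
  by (simp add: opx_def lower_lin raise_lin split: prod.splits)
lemma word_op_lin: "word_op w (\<lambda>m. \<Sum>i\<in>I. c i * f i m) = (\<lambda>m. \<Sum>i\<in>I. c i * word_op w (f i) m)"
  by (induction w) (simp_all add: opx_lin)

definition prodv :: "nat vec \<Rightarrow> nat vec \<Rightarrow> (nat + nat) vec" where
  "prodv ph ch = (\<lambda>M. ph (M \<circ> Inl) * ch (M \<circ> Inr))"

fun sigp :: "(bool \<times> (nat + nat)) list \<Rightarrow> (bool \<times> nat) list" where
  "sigp [] = []"
| "sigp ((d, Inl k) # w) = (d, k) # sigp w"
| "sigp ((d, Inr k) # w) = sigp w"

fun lop :: "(bool \<times> (nat + nat)) list \<Rightarrow> (bool \<times> nat) list" where
  "lop [] = []"
| "lop ((d, Inl k) # w) = lop w"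
| "lop ((d, Inr k) # w) = (d, k) # lop w"

lemma upd_Inl_l: "(M(Inl k := v)) \<circ> Inl = (M \<circ> Inl)(k := v)" by (auto simp: fun_eq_iff)
lemma upd_Inl_r: "(M(Inl k := v)) \<circ> Inr = (M \<circ> Inr)" by (auto simp: fun_eq_iff)
lemma upd_Inr_l: "(M(Inr k := v)) \<circ> Inl = (M \<circ> Inl)" by (auto simp: fun_eq_iff)
lemma upd_Inr_r: "(M(Inr k := v)) \<circ> Inr = (M \<circ> Inr)(k := v)" by (auto simp: fun_eq_iff)

lemma opx_Inl: "opx (d, Inl k) (prodv ph ch) = prodv (opx (d, k) ph) ch"
  by (auto simp: opx_def prodv_def lower_def raise_def fun_eq_iff upd_Inl_l upd_Inl_r)
lemma opx_Inr: "opx (d, Inr k) (prodv ph ch) = prodv ph (opx (d, k) ch)"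
  by (auto simp: opx_def prodv_def lower_def raise_def fun_eq_iff upd_Inr_l upd_Inr_r)

lemma word_op_prodv: "word_op w (prodv ph ch) = prodv (word_op (sigp w) ph) (word_op (lop w) ch)"
proof (induction w rule: sigp.induct)
  case 1 then show ?case by simp
next
  case (2 d k w) then show ?case by (simp add: opx_Inl)
next
  case (3 d k w) then show ?case by (simp add: opx_Inr)
qed

lemma sigp_append: "sigp (xs @ ys) = sigp xs @ sigp ys"
  by (induction xs rule: sigp.induct) auto
lemma lop_append: "lop (xs @ ys) = lop xs @ lop ys"
  by (induction xs rule: lop.induct) auto

lemma basis_prodv: "basis M = prodv (basis (M \<circ> Inl)) (basis (M \<circ> Inr))"
proof -
  have "(M' = M) \<longleftrightarrow> (M' \<circ> Inl = M \<circ> Inl \<and> M' \<circ> Inr = M \<circ> Inr)" for M' :: "nat + nat \<Rightarrow> nat"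
    apply (auto simp: fun_eq_iff)
    by (metis sum.exhaust)
  then show ?thesis by (auto simp: basis_def prodv_def fun_eq_iff)
qed

lemma vac_single: "word_op [x] (basis (\<lambda>_. 0)) (\<lambda>_. 0) = 0"
  by (auto simp: opx_def lower_def raise_def basis_def fun_eq_iff split: prod.splits)

definition tT :: "nat \<Rightarrow> (nat \<times> nat) set" where
  "tT N = {1..N} \<times> {0,1,2,3}"
definition te :: "nat \<times> nat \<Rightarrow> nat" where
  "te t = (if snd t \<ge> 2 then 1 else 0)"
definition tc :: "(nat \<Rightarrow> complex) \<Rightarrow> (nat \<Rightarrow> real) \<Rightarrow> nat \<times> nat \<Rightarrow> complex" where
  "tc \<alpha> \<omega> t = (if snd t = 0 then - \<i> * \<alpha> (fst t) else if snd t = 1 then \<i> * cnj (\<alpha> (fst t))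
     else complex_of_real (\<omega> (fst t)))"
definition tw :: "nat \<times> nat \<Rightarrow> (bool \<times> (nat + nat)) list" where
  "tw t = (if snd t = 0 then [(True, Inl (fst t))] else if snd t = 1 then [(False, Inl (fst t))]
     else if snd t = 2 then [(True, Inl (fst t)), (False, Inr (fst t))]
     else [(True, Inr (fst t)), (False, Inl (fst t))])"

definition opL :: "nat \<Rightarrow> (nat \<Rightarrow> complex) \<Rightarrow> (nat \<Rightarrow> real) \<Rightarrow> real \<Rightarrow> (nat + nat) op" where
  "opL N \<alpha> \<omega> \<delta> \<psi> = (\<lambda>m. \<Sum>t\<in>tT N. complex_of_real \<delta> ^ te t * tc \<alpha> \<omega> t * word_op (tw t) \<psi> m)"

lemma opL_alt: "opL N \<alpha> \<omega> \<delta> \<psi> m = (\<Sum>k\<in>{1..N}. \<Sum>j\<in>{0,1,2,3}.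
   complex_of_real \<delta> ^ te (k,j) * tc \<alpha> \<omega> (k,j) * word_op (tw (k,j)) \<psi> m)"
  unfolding opL_def tT_def sum.cartesian_product by (rule sum.cong) auto

lemma quad_eq: "quad N \<alpha> = opL N \<alpha> \<omega> 0"
proof (intro ext)
  fix \<psi> m
  show "quad N \<alpha> \<psi> m = opL N \<alpha> \<omega> 0 \<psi> m"
    unfolding opL_alt quad_def
    by (intro sum.cong) (auto simp: te_def tc_def tw_def opx_def algebra_simps)
qed

lemma raise_comb: "raise k (\<lambda>m. (f m + s * (g m + c * h m)) / r) m0
   = (raise k f m0 + s * (raise k g m0 + c * raise k h m0)) / r"
  by (simp add: raise_def algebra_simps add_divide_distrib)

lemma bbp_eq:
  assumes "\<delta> \<noteq> 0" "\<forall>k\<in>{1..N}. \<omega> k > 0"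
  shows "quad_bbp N \<alpha> \<omega> \<delta> = opL N \<alpha> \<omega> \<delta>"
proof (intro ext)
  fix \<psi> m
  have s2: "inverse (complex_of_real (sqrt 2)) * inverse (complex_of_real (sqrt 2)) * 2 = 1"
  proof -
    have "complex_of_real (sqrt 2) * complex_of_real (sqrt 2) = 2"
      by (simp flip: of_real_mult)
    moreover have "complex_of_real (sqrt 2) \<noteq> 0" by simp
    ultimately show ?thesis by (simp add: field_simps)
  qed
  show "quad_bbp N \<alpha> \<omega> \<delta> \<psi> m = opL N \<alpha> \<omega> \<delta> \<psi> m"
    unfolding opL_alt quad_bbp_def sum_distrib_left
  proof (intro sum.cong refl)
    fix k assume k: "k \<in> {1..N}"
    then have "\<omega> k > 0" using assms(2) by blast
    then have "\<omega> k \<noteq> 0" by simp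
    then have w: "complex_of_real (\<omega> k) * inverse (complex_of_real (\<omega> k)) = 1" by simp
    have d: "complex_of_real \<delta> * inverse (complex_of_real \<delta>) = 1" using assms by auto
    show "complex_of_real \<delta> * (complex_of_real (\<omega> k) *
         (out_raise 1 \<alpha> \<omega> \<delta> k (out_lower 1 \<alpha> \<omega> \<delta> k \<psi>) m -
          out_raise (- 1) \<alpha> \<omega> \<delta> k (out_lower (- 1) \<alpha> \<omega> \<delta> k \<psi>) m)) =
         (\<Sum>j\<in>{0, 1, 2, 3}. complex_of_real \<delta> ^ te (k, j) * tc \<alpha> \<omega> (k, j) * word_op (tw (k, j)) \<psi> m)"
      unfolding out_raise_def out_lower_def raise_comb
      apply (simp add: te_def tc_def tw_def opx_def beta_def)
      apply (simp only: divide_inverse inverse_mult_distrib)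
      using w d s2 by algebra
  qed
qed

definition Tn :: "nat \<Rightarrow> nat \<Rightarrow> (nat \<times> nat) list set" where
  "Tn N n = {ts. set ts \<subseteq> tT N \<and> length ts = n}"
definition coef :: "(nat \<Rightarrow> complex) \<Rightarrow> (nat \<Rightarrow> real) \<Rightarrow> real \<Rightarrow> (nat \<times> nat) list \<Rightarrow> complex" where
  "coef \<alpha> \<omega> \<delta> ts = prod_list (map (\<lambda>t. complex_of_real \<delta> ^ te t * tc \<alpha> \<omega> t) ts)"
definition Wd :: "(nat \<times> nat) list \<Rightarrow> (bool \<times> (nat + nat)) list" where
  "Wd ts = concat (map tw ts)"

lemma finite_tT: "finite (tT N)" by (simp add: tT_def)
lemma finite_Tn: "finite (Tn N n)" unfolding Tn_def by (rule finite_lists_length_eq[OF finite_tT])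

lemma Tn_Suc: "Tn N (Suc n) = (\<lambda>(t, ts). t # ts) ` (tT N \<times> Tn N n)"
  unfolding Tn_def
  by (auto simp: length_Suc_conv image_iff)

lemma sum_Tn_Suc: "(\<Sum>ts\<in>Tn N (Suc n). f ts) = (\<Sum>t\<in>tT N. \<Sum>ts\<in>Tn N n. f (t # ts))"
proof -
  have inj: "inj_on (\<lambda>(t, ts). t # ts) (tT N \<times> Tn N n)" by (auto simp: inj_on_def)
  show ?thesis unfolding Tn_Suc sum.reindex[OF inj] sum.cartesian_product by (simp add: split_def)
qed

lemma expand: "(opL N \<alpha> \<omega> \<delta> ^^ n) \<psi> = (\<lambda>m. \<Sum>ts\<in>Tn N n. coef \<alpha> \<omega> \<delta> ts * word_op (Wd ts) \<psi> m)"
proof (induction n)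
  case 0
  have "Tn N 0 = {[]}" by (auto simp: Tn_def)
  then show ?case by (simp add: coef_def Wd_def)
next
  case (Suc n)
  show ?case
  proof
    fix m
    have "(opL N \<alpha> \<omega> \<delta> ^^ Suc n) \<psi> m = opL N \<alpha> \<omega> \<delta> ((opL N \<alpha> \<omega> \<delta> ^^ n) \<psi>) m" by simp
    also have "\<dots> = (\<Sum>t\<in>tT N. \<Sum>ts\<in>Tn N n. complex_of_real \<delta> ^ te t * tc \<alpha> \<omega> t * 
        (coef \<alpha> \<omega> \<delta> ts * word_op (tw t) (word_op (Wd ts) \<psi>) m))"
      unfolding Suc opL_def word_op_lin by (simp add: sum_distrib_left)
    also have "\<dots> = (\<Sum>t\<in>tT N. \<Sum>ts\<in>Tn N n. coef \<alpha> \<omega> \<delta> (t # ts) * word_op (Wd (t # ts)) \<psi> m)"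
      by (simp add: coef_def Wd_def word_op_append mult.assoc)
    also have "\<dots> = (\<Sum>ts\<in>Tn N (Suc n). coef \<alpha> \<omega> \<delta> ts * word_op (Wd ts) \<psi> m)"
      by (simp add: sum_Tn_Suc)
    finally show "(opL N \<alpha> \<omega> \<delta> ^^ Suc n) \<psi> m = (\<Sum>ts\<in>Tn N (Suc n). coef \<alpha> \<omega> \<delta> ts * word_op (Wd ts) \<psi> m)" .
  qed
qed

definition se :: "(nat \<times> nat) list \<Rightarrow> nat" where "se ts = sum_list (map te ts)"
definition pc :: "(nat \<Rightarrow> complex) \<Rightarrow> (nat \<Rightarrow> real) \<Rightarrow> (nat \<times> nat) list \<Rightarrow> complex" where
  "pc \<alpha> \<omega> ts = prod_list (map (tc \<alpha> \<omega>) ts)"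

lemma coef_split: "coef \<alpha> \<omega> \<delta> ts = complex_of_real \<delta> ^ se ts * pc \<alpha> \<omega> ts"
  by (induction ts) (simp_all add: coef_def se_def pc_def power_add)

lemma sigp_tw: "sigp (tw t) = [(if snd t = 0 \<or> snd t = 2 then True else False, fst t)]"
  by (simp add: tw_def)
lemma lop_tw_len: "length (lop (tw t)) = te t"
  by (simp add: tw_def te_def)

lemma len_sigp_Wd: "length (sigp (Wd ts)) = length ts"
  by (induction ts) (simp_all add: Wd_def sigp_append sigp_tw)
lemma len_lop_Wd: "length (lop (Wd ts)) = se ts"
  by (induction ts) (simp_all add: Wd_def se_def lop_append lop_tw_len)
lemma set_sigp_Wd: "set ts \<subseteq> tT N \<Longrightarrow> (d, k) \<in> set (sigp (Wd ts)) \<Longrightarrow> k \<in> {1..N}"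
  by (induction ts) (auto simp: Wd_def sigp_append sigp_tw tT_def)

lemma infsum_finite_sum:
  fixes f :: "'b \<Rightarrow> 'a \<Rightarrow> complex"
  assumes "finite I" "\<And>i. i \<in> I \<Longrightarrow> f i summable_on A"
  shows "infsum (\<lambda>x. \<Sum>i\<in>I. f i x) A = (\<Sum>i\<in>I. infsum (f i) A)
     \<and> (\<lambda>x. \<Sum>i\<in>I. f i x) summable_on A"
  using assms
proof (induction I rule: finite_induct)
  case empty then show ?case by simp
next
  case (insert i I)
  then have IH: "infsum (\<lambda>x. \<Sum>i\<in>I. f i x) A = (\<Sum>i\<in>I. infsum (f i) A)"
    "(\<lambda>x. \<Sum>i\<in>I. f i x) summable_on A" by auto
  have fi: "f i summable_on A" using insert by auto
  show ?case using insert(1,2) IH fi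
    by (simp add: infsum_add summable_on_add)
qed

definition jn :: "(nat \<Rightarrow> nat) \<Rightarrow> (nat + nat \<Rightarrow> nat)" where
  "jn m = case_sum m (\<lambda>_. 0)"

lemma jn_Inl[simp]: "jn m \<circ> Inl = m" by (simp add: jn_def fun_eq_iff)
lemma jn_Inr[simp]: "jn m \<circ> Inr = (\<lambda>_. 0)" by (simp add: jn_def fun_eq_iff)
lemma jn_Inl'[simp]: "jn m (Inl k) = m k" by (simp add: jn_def)
lemma jn_Inr'[simp]: "jn m (Inr k) = 0" by (simp add: jn_def)

lemma elem: "word_op w (basis (jn m)) (jn m')
   = word_op (sigp w) (basis m) m' * word_op (lop w) (basis (\<lambda>_. 0)) (\<lambda>_. 0)"
proof -
  have "basis (jn m) = prodv (basis m) (basis (\<lambda>_. 0))" using basis_prodv[of "jn m"] by simp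
  then show ?thesis by (simp only: word_op_prodv) (simp add: prodv_def)
qed

lemma expect_red:
  "expect (occ_joint N) (joint_state \<rho>a) X =
   infsum (\<lambda>(m, m'). \<rho>a m m' * X (basis (jn m)) (jn m')) (occ_sig N \<times> occ_sig N)"
proof -
  define h where "h = (\<lambda>(m::nat\<Rightarrow>nat, m'::nat\<Rightarrow>nat). (jn m, jn m'))"
  have injh: "inj_on h (occ_sig N \<times> occ_sig N)"
    unfolding h_def inj_on_def by (auto, metis jn_Inl, metis jn_Inl)
  have sub: "h ` (occ_sig N \<times> occ_sig N) \<subseteq> occ_joint N \<times> occ_joint N"
    by (auto simp: h_def occ_sig_def occ_joint_def jn_def)
  have zero: "tr_summand (joint_state \<rho>a) X x = 0"
    if "x \<in> occ_joint N \<times> occ_joint N - h ` (occ_sig N \<times> occ_sig N)" for x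
  proof (rule ccontr)
    obtain M M' where x: "x = (M, M')" by fastforce
    assume "tr_summand (joint_state \<rho>a) X x \<noteq> 0"
    then have z: "\<forall>k. M (Inr k) = 0 \<and> M' (Inr k) = 0"
      by (auto simp: x tr_summand_def joint_state_def split: if_splits)
    have "M = jn (M \<circ> Inl)" "M' = jn (M' \<circ> Inl)" using z
      by (auto simp: jn_def fun_eq_iff split: sum.splits)
    moreover have "M \<circ> Inl \<in> occ_sig N" "M' \<circ> Inl \<in> occ_sig N"
      using that by (auto simp: x occ_sig_def occ_joint_def)
    ultimately have "x \<in> h ` (occ_sig N \<times> occ_sig N)"
      unfolding x h_def image_iff by (intro bexI[of _ "(M \<circ> Inl, M' \<circ> Inl)"]) auto
    then show False using that by auto
  qed
  have "expect (occ_joint N) (joint_state \<rho>a) X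
      = infsum (tr_summand (joint_state \<rho>a) X) (h ` (occ_sig N \<times> occ_sig N))"
    unfolding expect_def
    by (rule infsum_cong_neutral) (use zero sub in auto)
  also have "\<dots> = infsum (tr_summand (joint_state \<rho>a) X \<circ> h) (occ_sig N \<times> occ_sig N)"
    by (rule infsum_reindex[OF injh])
  also have "\<dots> = infsum (\<lambda>(m, m'). \<rho>a m m' * X (basis (jn m)) (jn m')) (occ_sig N \<times> occ_sig N)"
    by (rule infsum_cong) (auto simp: h_def tr_summand_def joint_state_def)
  finally show ?thesis .
qed

definition LO :: "(nat \<times> nat) list \<Rightarrow> complex" where
  "LO ts = word_op (lop (Wd ts)) (basis (\<lambda>_. 0)) (\<lambda>_. 0)"

definition Kc :: "nat \<Rightarrow> (nat \<Rightarrow> complex) \<Rightarrow> (nat \<Rightarrow> real) \<Rightarrow> ((nat \<Rightarrow> nat) \<Rightarrow> (nat \<Rightarrow> nat) \<Rightarrow> complex)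
   \<Rightarrow> (nat \<times> nat) list \<Rightarrow> complex" where
  "Kc N \<alpha> \<omega> \<rho>a ts = pc \<alpha> \<omega> ts * LO ts *
      infsum (tr_summand \<rho>a (word_op (sigp (Wd ts)))) (occ_sig N \<times> occ_sig N)"

lemma E_formula:
  assumes "\<forall>w. length w \<le> n \<longrightarrow> (\<forall>(d, k)\<in>set w. k \<in> {1..N}) \<longrightarrow>
           tr_summand \<rho>a (word_op w) summable_on (occ_sig N \<times> occ_sig N)"
  shows "expect (occ_joint N) (joint_state \<rho>a) (opL N \<alpha> \<omega> \<delta> ^^ n)
    = (\<Sum>ts\<in>Tn N n. complex_of_real \<delta> ^ se ts * Kc N \<alpha> \<omega> \<rho>a ts)"
proof -
  have sm: "tr_summand \<rho>a (word_op (sigp (Wd ts))) summable_on (occ_sig N \<times> occ_sig N)"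
    if "ts \<in> Tn N n" for ts
  proof -
    have "length (sigp (Wd ts)) \<le> n" using that by (simp add: Tn_def len_sigp_Wd)
    moreover have "\<forall>(d, k)\<in>set (sigp (Wd ts)). k \<in> {1..N}"
      using that set_sigp_Wd[of ts N] by (auto simp: Tn_def)
    ultimately show ?thesis using assms by blast
  qed
  define g where "g ts = (\<lambda>p. coef \<alpha> \<omega> \<delta> ts * LO ts * tr_summand \<rho>a (word_op (sigp (Wd ts))) p)" for ts
  have gs: "g ts summable_on (occ_sig N \<times> occ_sig N)" if "ts \<in> Tn N n" for ts
    unfolding g_def by (rule summable_on_cmult_right[OF sm[OF that]])
  have "expect (occ_joint N) (joint_state \<rho>a) (opL N \<alpha> \<omega> \<delta> ^^ n)
      = infsum (\<lambda>p. \<Sum>ts\<in>Tn N n. g ts p) (occ_sig N \<times> occ_sig N)"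
    unfolding expect_red expand
    by (rule infsum_cong) (auto simp: g_def sum_distrib_left elem tr_summand_def LO_def mult_ac)
  also have "\<dots> = (\<Sum>ts\<in>Tn N n. infsum (g ts) (occ_sig N \<times> occ_sig N))"
    using infsum_finite_sum[where f=g and I="Tn N n" and A="occ_sig N \<times> occ_sig N"] gs finite_Tn by blast
  also have "\<dots> = (\<Sum>ts\<in>Tn N n. complex_of_real \<delta> ^ se ts * Kc N \<alpha> \<omega> \<rho>a ts)"
    by (rule sum.cong) (simp_all add: g_def infsum_cmult_right' Kc_def coef_split mult_ac)
  finally show ?thesis .
qed

lemma term_bound:
  assumes "0 < \<delta>" "\<delta> \<le> 1"
  shows "norm ((complex_of_real \<delta> ^ se ts - complex_of_real 0 ^ se ts) * Kc N \<alpha> \<omega> \<rho>a ts)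
     \<le> \<delta>^2 * norm (Kc N \<alpha> \<omega> \<rho>a ts)"
proof (cases "se ts")
  case 0 then show ?thesis by simp
next
  case (Suc j)
  show ?thesis
  proof (cases j)
    case 0
    then have "length (lop (Wd ts)) = 1" using Suc len_lop_Wd by simp
    then obtain x where "lop (Wd ts) = [x]" by (metis One_nat_def length_0_conv length_Suc_conv)
    then have "LO ts = 0" by (simp add: LO_def vac_single[of x, simplified])
    then show ?thesis by (simp add: Kc_def)
  next
    case (Suc i)
    then have ge: "2 \<le> se ts" using \<open>se ts = Suc j\<close> by simp
    have "norm ((complex_of_real \<delta> ^ se ts - complex_of_real 0 ^ se ts) * Kc N \<alpha> \<omega> \<rho>a ts)
        = \<delta> ^ se ts * norm (Kc N \<alpha> \<omega> \<rho>a ts)"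
    proof -
      have "se ts \<noteq> 0" using ge by simp
      then show ?thesis using assms by (simp add: norm_mult norm_power power_0_left)
    qed
    also have "\<dots> \<le> \<delta>^2 * norm (Kc N \<alpha> \<omega> \<rho>a ts)"
      using power_decreasing[OF ge, of \<delta>] assms by (intro mult_right_mono) auto
    finally show ?thesis .
  qed
qed

theorem theorem1:
  fixes N n :: nat and \<omega> :: "nat \<Rightarrow> real" and \<alpha> :: "nat \<Rightarrow> complex"
    and \<rho>a :: "(nat \<Rightarrow> nat) \<Rightarrow> (nat \<Rightarrow> nat) \<Rightarrow> complex"
  assumes "N \<ge> 1" and "n \<ge> 1"
    and "\<forall>k\<in>{1..N}. \<omega> k > 0"
    and "density_matrix (occ_sig N) \<rho>a"
    and "\<forall>w. length w \<le> n \<longrightarrow> (\<forall>(d, k)\<in>set w. k \<in> {1..N}) \<longrightarrow>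
           tr_summand \<rho>a (word_op w) summable_on (occ_sig N \<times> occ_sig N)"
  shows "(\<lambda>\<delta>. cmod (expect (occ_joint N) (joint_state \<rho>a) (quad_bbp N \<alpha> \<omega> \<delta> ^^ n)
                  - expect (occ_joint N) (joint_state \<rho>a) (quad N \<alpha> ^^ n)))
         \<in> O[at_right 0](\<lambda>\<delta>. \<delta> ^ 2)"
proof (rule bigoI)
  define C where "C = (\<Sum>ts\<in>Tn N n. norm (Kc N \<alpha> \<omega> \<rho>a ts))"
  show "eventually (\<lambda>\<delta>. norm (cmod (expect (occ_joint N) (joint_state \<rho>a) (quad_bbp N \<alpha> \<omega> \<delta> ^^ n)
                  - expect (occ_joint N) (joint_state \<rho>a) (quad N \<alpha> ^^ n))) \<le> C * norm (\<delta> ^ 2))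
     (at_right 0)"
    using eventually_at_right_real[OF zero_less_one]
  proof (rule eventually_mono)
    fix \<delta> :: real assume d: "\<delta> \<in> {0<..<1}"
    have "expect (occ_joint N) (joint_state \<rho>a) (quad_bbp N \<alpha> \<omega> \<delta> ^^ n)
        - expect (occ_joint N) (joint_state \<rho>a) (quad N \<alpha> ^^ n)
        = (\<Sum>ts\<in>Tn N n. (complex_of_real \<delta> ^ se ts - complex_of_real 0 ^ se ts) * Kc N \<alpha> \<omega> \<rho>a ts)"
    proof -
      have "quad_bbp N \<alpha> \<omega> \<delta> = opL N \<alpha> \<omega> \<delta>" using d bbp_eq[OF _ assms(3)] by simp
      moreover have "quad N \<alpha> = opL N \<alpha> \<omega> 0" by (rule quad_eq)
      ultimately show ?thesis
        by (simp only: E_formula[OF assms(5)] sum_subtractf[symmetric] left_diff_distrib)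
    qed
    then have "norm (expect (occ_joint N) (joint_state \<rho>a) (quad_bbp N \<alpha> \<omega> \<delta> ^^ n)
        - expect (occ_joint N) (joint_state \<rho>a) (quad N \<alpha> ^^ n))
        \<le> (\<Sum>ts\<in>Tn N n. \<delta>^2 * norm (Kc N \<alpha> \<omega> \<rho>a ts))"
    proof -
      note eq = \<open>expect (occ_joint N) (joint_state \<rho>a) (quad_bbp N \<alpha> \<omega> \<delta> ^^ n)
        - expect (occ_joint N) (joint_state \<rho>a) (quad N \<alpha> ^^ n) = _\<close>
      show ?thesis unfolding eq
        by (rule order.trans[OF norm_sum], rule sum_mono, rule term_bound) (use d in auto)
    qed
    then show "norm (cmod (expect (occ_joint N) (joint_state \<rho>a) (quad_bbp N \<alpha> \<omega> \<delta> ^^ n)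
                  - expect (occ_joint N) (joint_state \<rho>a) (quad N \<alpha> ^^ n))) \<le> C * norm (\<delta> ^ 2)"
      by (simp add: C_def sum_distrib_left mult.commute)
  qed
qed

end
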